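(* Let $n\ge 4$, let $\lambda=(\lambda_1,\lambda_2)$ with integers $\lambda_1\ge\lambda_2\ge 0$, and let $(\lambda,i,j,k)$ be admissible. For fixed $w \in W$, the expression $\langle w, \psi_{\lambda,(i,j,k)}(\{x_1,\dots,x_i\})(\gamma)\rangle$ is a polynomial in the entries of the orthogonal matrix $\gamma \in \mathrm{O}(n)$ and of the vectors $x_1,\dots,x_i$.
   Context: Setting. Fix an angle $\theta$ and consider the graph on $S^{n-1}$ in which distinct $x,y$ are adjacent if $\langle x,y\rangle > \cos\theta$; $\mathcal{I}_2$ is the set of independent sets of this graph of cardinality at most $2$, and $\mathcal{I}_{=i}$ those of cardinality exactly $i$. $\mathrm{O}(n,\mathbb{C})$ denotes complex $n\times n$ matrices $g$ with $g^{\sf T}g = I$, $\mathrm{O}(n)$ the real ones. Let $U=\mathbb{C}^2$ with basis $e_1,e_2$, $m = \lambda_1-\lambda_2$, $W = \mathrm{Sym}^{\lambda_2}(\wedge^2U)\otimes\mathrm{Sym}^m(U)$ with induced action $\rho$ of $2\times 2$ complex matrices, orthonormal basis $w_k = (e_1\wedge e_2)^{\lambda_2}e_1^{m-k}e_2^k$ ($0\le k\le m$), and $c_1(k) = \lambda_2+m-k$, $c_2(k) = \lambda_2+k$. Let $\omega = (I_2\ \ iI_2\ \ 0)$ ($2\times n$) and $\epsilon = \binom{I_2}{0}$ ($n\times 2$); for $w\in W$, $f_w(\gamma) = \rho(\omega\gamma\epsilon)w$ for $\gamma\in \mathrm{O}(n,\mathbb{C})$; $V$ is the span of the right translates $\gamma\mapsto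 f_w(\gamma g)$, $g \in \mathrm{O}(n,\mathbb{C})$, $\pi$ the right-translation representation of $\mathrm{O}(n)$ on $V$, $\Psi(w) = f_w$. For $J = \{x,y\}\in\mathcal{I}_2$ (with $x=y$ if $|J|=1$): $p_j(J) = \langle x,y\rangle^j$, $q_1(J) = \sqrt{2+2\langle x,y\rangle}$, $q_2(J) = \sqrt{2-2\langle x,y\rangle}$; orbit representative $R_J = \{(q_1/2,q_2/2,0,\dots,0),(q_1/2,-q_2/2,0,\dots,0)\}$ for $|J|\ge1$ and $\emptyset$ for $J=\emptyset$; a section is $s\colon\mathcal{I}_2\to\mathrm{O}(n)$ with $s(J)R_J = J$. Admissible tuples: $i=0$: $\lambda=(0,0)$, $j=k=0$; $i=1$: $\lambda_2=0$, $j=k=0$; $i=2$: $j\ge0$, $0\le k\le m$, $\lambda_2+k$ even. Define $\psi_{\lambda,(i,j,k)}(J) = \xi_{\lambda,i,j,k}(J)\pi(s(J))\Psi(w_k)$ with $\xi = 1$ if $i=|J|<2$, $\xi = p_j(J)q_1(J)^{c_1(k)}q_2(J)^{c_2(k)}$ if $i=|J|=2$, and $\xi=0$ otherwise (with $0^0 = 1$); this does not depend on the choice of section. *)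

theory Defs
  imports Complex_Main
begin

text \<open>Conventions: vectors in R^n are functions nat => real, coordinates 0..n-1
(the paper's coordinates 1..n), vanishing at indices >= n. Matrices are
functions nat => nat => 'a, only entries with indices in range are relevant.\<close>

definition rinner :: "nat \<Rightarrow> (nat \<Rightarrow> real) \<Rightarrow> (nat \<Rightarrow> real) \<Rightarrow> real" where
  "rinner n x y = (\<Sum>l<n. x l * y l)"

definition sphere_n :: "nat \<Rightarrow> (nat \<Rightarrow> real) set" where
  "sphere_n n = {x. (\<forall>l\<ge>n. x l = 0) \<and> rinner n x x = 1}"

definition orth :: "nat \<Rightarrow> (nat \<Rightarrow> nat \<Rightarrow> real) \<Rightarrow> bool" where
  "orth n g \<longleftrightarrow> (\<forall>a<n. \<forall>b<n. (\<Sum>l<n. g l a * g l b) = (if a = b then 1 else 0))"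

definition mv :: "nat \<Rightarrow> (nat \<Rightarrow> nat \<Rightarrow> real) \<Rightarrow> (nat \<Rightarrow> real) \<Rightarrow> (nat \<Rightarrow> real)" where
  "mv n g x = (\<lambda>a. if a < n then (\<Sum>l<n. g a l * x l) else 0)"

definition indep :: "real \<Rightarrow> nat \<Rightarrow> (nat \<Rightarrow> real) set \<Rightarrow> bool" where
  "indep \<theta> n J \<longleftrightarrow> J \<subseteq> sphere_n n \<and>
     (\<forall>x\<in>J. \<forall>y\<in>J. x \<noteq> y \<longrightarrow> \<not> (rinner n x y > cos \<theta>))"

definition I2 :: "real \<Rightarrow> nat \<Rightarrow> (nat \<Rightarrow> real) set set" where
  "I2 \<theta> n = {J. indep \<theta> n J \<and> finite J \<and> card J \<le> 2}"

definition Ieq :: "real \<Rightarrow> nat \<Rightarrow> nat \<Rightarrow> (nat \<Rightarrow> real) set set" where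
  "Ieq \<theta> n i = {J. indep \<theta> n J \<and> finite J \<and> card J = i}"

text \<open>For J = {x,y} (x = y if |J| = 1): <x,y>, and the functions p_j, q_1, q_2.\<close>
definition pairip :: "nat \<Rightarrow> (nat \<Rightarrow> real) set \<Rightarrow> real" where
  "pairip n J = (SOME t. \<exists>x y. J = {x, y} \<and> t = rinner n x y)"

definition pfun :: "nat \<Rightarrow> nat \<Rightarrow> (nat \<Rightarrow> real) set \<Rightarrow> real" where
  "pfun n j J = pairip n J ^ j"

definition q1 :: "nat \<Rightarrow> (nat \<Rightarrow> real) set \<Rightarrow> real" where
  "q1 n J = sqrt (2 + 2 * pairip n J)"

definition q2 :: "nat \<Rightarrow> (nat \<Rightarrow> real) set \<Rightarrow> real" where
  "q2 n J = sqrt (2 - 2 * pairip n J)"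

definition RJ :: "nat \<Rightarrow> (nat \<Rightarrow> real) set \<Rightarrow> (nat \<Rightarrow> real) set" where
  "RJ n J = (if J = {} then {} else
     {(\<lambda>l. if l = 0 then q1 n J / 2 else if l = 1 then q2 n J / 2 else 0),
      (\<lambda>l. if l = 0 then q1 n J / 2 else if l = 1 then - q2 n J / 2 else 0)})"

definition is_section :: "real \<Rightarrow> nat \<Rightarrow> ((nat \<Rightarrow> real) set \<Rightarrow> (nat \<Rightarrow> nat \<Rightarrow> real)) \<Rightarrow> bool" where
  "is_section \<theta> n s \<longleftrightarrow> (\<forall>J\<in>I2 \<theta> n. orth n (s J) \<and> mv n (s J) ` RJ n J = J)"

text \<open>The space W = Sym^{l2}(wedge^2 U) (x) Sym^m(U) is identified with C^{m+1} via the
basis w_k = (e1 wedge e2)^{l2} e1^{m-k} e2^k, k = 0..m: a vector is its coefficient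
function nat => complex (coefficients at k > m are irrelevant).\<close>

definition wbasis :: "nat \<Rightarrow> (nat \<Rightarrow> complex)" where
  "wbasis k = (\<lambda>l. if l = k then 1 else 0)"

definition Winner :: "nat \<Rightarrow> (nat \<Rightarrow> complex) \<Rightarrow> (nat \<Rightarrow> complex) \<Rightarrow> complex" where
  "Winner m v u = (\<Sum>l\<le>m. v l * cnj (u l))"

definition det2 :: "(nat \<Rightarrow> nat \<Rightarrow> complex) \<Rightarrow> complex" where
  "det2 A = A 0 0 * A 1 1 - A 0 1 * A 1 0"

text \<open>Coefficient of e1^{m-l} e2^l in (A e1)^{m-k} (A e2)^k, where
A e1 = A00 e1 + A10 e2 and A e2 = A01 e1 + A11 e2.\<close>
definition symcoeff :: "nat \<Rightarrow> (nat \<Rightarrow> nat \<Rightarrow> complex) \<Rightarrow> nat \<Rightarrow> nat \<Rightarrow> complex" where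
  "symcoeff m A k l = (\<Sum>r\<le>l. if r \<le> m - k \<and> l - r \<le> k then
      of_nat ((m - k) choose r) * A 1 0 ^ r * A 0 0 ^ (m - k - r) *
      of_nat (k choose (l - r)) * A 1 1 ^ (l - r) * A 0 1 ^ (k - (l - r))
    else 0)"

text \<open>Induced action rho(A) w_k = det(A)^{l2} (A e1)^{m-k} (A e2)^k, extended linearly.\<close>
definition rho :: "nat \<Rightarrow> nat \<Rightarrow> (nat \<Rightarrow> nat \<Rightarrow> complex) \<Rightarrow> (nat \<Rightarrow> complex) \<Rightarrow> (nat \<Rightarrow> complex)" where
  "rho l2 m A v = (\<lambda>l. if l \<le> m then det2 A ^ l2 * (\<Sum>k\<le>m. v k * symcoeff m A k l) else 0)"

text \<open>omega = (I_2  i I_2  0) (2 x n), epsilon = (I_2 ; 0) (n x 2).\<close>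
definition omega :: "nat \<Rightarrow> nat \<Rightarrow> complex" where
  "omega a b = (if a = 0 then (if b = 0 then 1 else if b = 2 then \<i> else 0)
                else if a = 1 then (if b = 1 then 1 else if b = 3 then \<i> else 0) else 0)"

definition epsilon :: "nat \<Rightarrow> nat \<Rightarrow> complex" where
  "epsilon a b = (if a = b \<and> b < 2 then 1 else 0)"

definition mmul :: "nat \<Rightarrow> (nat \<Rightarrow> nat \<Rightarrow> complex) \<Rightarrow> (nat \<Rightarrow> nat \<Rightarrow> complex) \<Rightarrow> (nat \<Rightarrow> nat \<Rightarrow> complex)" where
  "mmul d A B = (\<lambda>a b. \<Sum>l<d. A a l * B l b)"

definition cmat :: "(nat \<Rightarrow> nat \<Rightarrow> real) \<Rightarrow> (nat \<Rightarrow> nat \<Rightarrow> complex)" where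
  "cmat g = (\<lambda>a b. complex_of_real (g a b))"

definition Psi :: "nat \<Rightarrow> nat \<Rightarrow> nat \<Rightarrow> (nat \<Rightarrow> complex) \<Rightarrow> ((nat \<Rightarrow> nat \<Rightarrow> complex) \<Rightarrow> (nat \<Rightarrow> complex))" where
  "Psi n l2 m v = (\<lambda>\<gamma>. rho l2 m (mmul n (mmul n omega \<gamma>) epsilon) v)"

definition pi_rep :: "nat \<Rightarrow> (nat \<Rightarrow> nat \<Rightarrow> real) \<Rightarrow> ((nat \<Rightarrow> nat \<Rightarrow> complex) \<Rightarrow> 'b) \<Rightarrow> ((nat \<Rightarrow> nat \<Rightarrow> complex) \<Rightarrow> 'b)" where
  "pi_rep n g f = (\<lambda>\<gamma>. f (mmul n \<gamma> (cmat g)))"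

definition admissible :: "nat \<Rightarrow> nat \<Rightarrow> nat \<Rightarrow> nat \<Rightarrow> nat \<Rightarrow> bool" where
  "admissible l1 l2 i j k \<longleftrightarrow>
     (i = 0 \<and> l1 = 0 \<and> l2 = 0 \<and> j = 0 \<and> k = 0) \<or>
     (i = 1 \<and> l2 = 0 \<and> j = 0 \<and> k = 0) \<or>
     (i = 2 \<and> k \<le> l1 - l2 \<and> even (l2 + k))"

definition xi :: "nat \<Rightarrow> nat \<Rightarrow> nat \<Rightarrow> nat \<Rightarrow> nat \<Rightarrow> nat \<Rightarrow> (nat \<Rightarrow> real) set \<Rightarrow> real" where
  "xi n l1 l2 i j k J =
     (if i = card J \<and> i < 2 then 1
      else if i = card J \<and> i = 2 then
        pfun n j J * q1 n J ^ (l2 + (l1 - l2) - k) * q2 n J ^ (l2 + k)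
      else 0)"

definition psi :: "nat \<Rightarrow> ((nat \<Rightarrow> real) set \<Rightarrow> (nat \<Rightarrow> nat \<Rightarrow> real)) \<Rightarrow> nat \<Rightarrow> nat \<Rightarrow> nat \<Rightarrow> nat \<Rightarrow> nat
     \<Rightarrow> (nat \<Rightarrow> real) set \<Rightarrow> (nat \<Rightarrow> nat \<Rightarrow> complex) \<Rightarrow> (nat \<Rightarrow> complex)" where
  "psi n s l1 l2 i j k J = (\<lambda>\<gamma> l. complex_of_real (xi n l1 l2 i j k J) *
       pi_rep n (s J) (Psi n l2 (l1 - l2) (wbasis k)) \<gamma> l)"

inductive_set polyfun :: "'v set \<Rightarrow> (('v \<Rightarrow> real) \<Rightarrow> complex) set" for V where
  pconst: "(\<lambda>_. c) \<in> polyfun V"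
| pvar: "a \<in> V \<Longrightarrow> (\<lambda>v. complex_of_real (v a)) \<in> polyfun V"
| padd: "p \<in> polyfun V \<Longrightarrow> q \<in> polyfun V \<Longrightarrow> (\<lambda>v. p v + q v) \<in> polyfun V"
| pmult: "p \<in> polyfun V \<Longrightarrow> q \<in> polyfun V \<Longrightarrow> (\<lambda>v. p v * q v) \<in> polyfun V"

text \<open>Variables: Inl (a,b) = entry gamma_{ab}, Inr (a,l) = l-th coordinate of x_a.\<close>
definition vars :: "nat \<Rightarrow> nat \<Rightarrow> ((nat \<times> nat) + (nat \<times> nat)) set" where
  "vars n i = {Inl (a, b) | a b. a < n \<and> b < n} \<union> {Inr (a, l) | a l. a < i \<and> l < n}"

definition assign :: "(nat \<Rightarrow> nat \<Rightarrow> real) \<Rightarrow> (nat \<Rightarrow> nat \<Rightarrow> real) \<Rightarrow> ((nat \<times> nat) + (nat \<times> nat)) \<Rightarrow> real" where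
  "assign \<gamma> x v = (case v of Inl (a, b) \<Rightarrow> \<gamma> a b | Inr (a, l) \<Rightarrow> x a l)"

end

theory Submission imports Defs begin

lemma pf_cnj: "p \<in> polyfun V \<Longrightarrow> (\<lambda>v. cnj (p v)) \<in> polyfun V"
  by (induction rule: polyfun.induct) (auto intro: polyfun.intros)

lemma pf_sum: assumes "finite S" "\<And>x. x \<in> S \<Longrightarrow> (\<lambda>v. f x v) \<in> polyfun V"
  shows "(\<lambda>v. \<Sum>x\<in>S. f x v) \<in> polyfun V"
  using assms by (induction S rule: finite_induct) (auto intro: polyfun.intros)

lemma pf_pow: "p \<in> polyfun V \<Longrightarrow> (\<lambda>v. p v ^ n) \<in> polyfun V"
  by (induction n) (auto intro: polyfun.intros)

lemma pf_diff: "p \<in> polyfun V \<Longrightarrow> q \<in> polyfun V \<Longrightarrow> (\<lambda>v. p v - q v) \<in> polyfun V"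
proof -
  assume a: "p \<in> polyfun V" "q \<in> polyfun V"
  have "(\<lambda>v. p v + (-1) * q v) \<in> polyfun V"
    by (intro polyfun.intros a)
  then show ?thesis by simp
qed

lemma pf_if: "(c \<Longrightarrow> (\<lambda>v. p v) \<in> polyfun V) \<Longrightarrow> (\<not> c \<Longrightarrow> (\<lambda>v. q v) \<in> polyfun V) \<Longrightarrow> (\<lambda>v. if c then p v else q v) \<in> polyfun V"
  by (cases c) auto

lemmas pf_intros = polyfun.padd polyfun.pmult pf_pow pf_cnj pf_sum pf_diff pf_if polyfun.pconst

lemma pf_det2: "(\<And>a b. (\<lambda>v. M v a b) \<in> polyfun V) \<Longrightarrow> (\<lambda>v. det2 (M v)) \<in> polyfun V"
  unfolding det2_def by (intro pf_intros) auto

lemma pf_symcoeff: "(\<And>a b. (\<lambda>v. M v a b) \<in> polyfun V) \<Longrightarrow> (\<lambda>v. symcoeff m (M v) k l) \<in> polyfun V"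
  unfolding symcoeff_def by (intro pf_intros) auto

definition Hm :: "nat \<Rightarrow> (nat \<Rightarrow> nat \<Rightarrow> real) \<Rightarrow> nat \<Rightarrow> (nat \<Rightarrow> real) \<Rightarrow> complex" where
  "Hm n g a u = (\<Sum>t<n. omega a t * (\<Sum>s<n. complex_of_real (g t s) * complex_of_real (u s)))"

definition Bm :: "nat \<Rightarrow> (nat \<Rightarrow> nat \<Rightarrow> real) \<Rightarrow> (nat \<Rightarrow> real) \<Rightarrow> (nat \<Rightarrow> real) \<Rightarrow> nat \<Rightarrow> nat \<Rightarrow> complex" where
  "Bm n g x0 x1 a b = Hm n g a (if b = 0 then (\<lambda>s. x0 s + x1 s) else (\<lambda>s. x0 s - x1 s))"

lemma pf_Hm:
  assumes "\<And>s. s < n \<Longrightarrow> (\<lambda>v. complex_of_real (u v s)) \<in> polyfun (vars n i)"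
  shows "(\<lambda>v. Hm n (\<lambda>a b. v (Inl (a, b))) a (u v)) \<in> polyfun (vars n i)"
  unfolding Hm_def
  by (intro pf_intros polyfun.pvar assms) (auto simp: vars_def)

lemma pf_Bm: "(\<lambda>v. Bm n (\<lambda>a b. v (Inl (a, b))) (\<lambda>l. v (Inr (0, l))) (\<lambda>l. v (Inr (1, l))) a b) \<in> polyfun (vars n 2)"
proof (cases "b = 0")
  case True
  have e: "(\<lambda>v. Bm n (\<lambda>a b. v (Inl (a, b))) (\<lambda>l. v (Inr (0, l))) (\<lambda>l. v (Inr (1, l))) a b)
     = (\<lambda>v. Hm n (\<lambda>a b. v (Inl (a, b))) a (\<lambda>s. v (Inr (0, s)) + v (Inr (1, s))))"
    by (simp add: Bm_def True)
  show ?thesis unfolding e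
    by (rule pf_Hm) (auto intro!: pf_intros polyfun.pvar simp: vars_def)
next
  case False
  have e: "(\<lambda>v. Bm n (\<lambda>a b. v (Inl (a, b))) (\<lambda>l. v (Inr (0, l))) (\<lambda>l. v (Inr (1, l))) a b)
     = (\<lambda>v. Hm n (\<lambda>a b. v (Inl (a, b))) a (\<lambda>s. v (Inr (0, s)) - v (Inr (1, s))))"
    by (simp add: Bm_def False)
  show ?thesis unfolding e
    by (rule pf_Hm) (auto intro!: pf_intros polyfun.pvar simp: vars_def)
qed

lemma pf_B1: "(\<lambda>v. Hm n (\<lambda>a b. v (Inl (a, b))) a (\<lambda>l. v (Inr (0, l)))) \<in> polyfun (vars n 1)"
  by (rule pf_Hm) (auto intro!: pf_intros polyfun.pvar simp: vars_def)

lemma det2_scale: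
  assumes "B 0 0 = c * A 0 0" "B 1 0 = c * A 1 0" "B 0 1 = d * A 0 1" "B 1 1 = d * A 1 1"
  shows "det2 B = c * d * det2 A"
  using assms unfolding det2_def by (simp add: algebra_simps)

lemma symcoeff_scale:
  assumes "B 0 0 = c * A 0 0" "B 1 0 = c * A 1 0" "B 0 1 = d * A 0 1" "B 1 1 = d * A 1 1"
    and "k \<le> m"
  shows "symcoeff m B k l = c ^ (m - k) * d ^ k * symcoeff m A k l"
  unfolding symcoeff_def sum_distrib_left
proof (rule sum.cong)
  fix r assume "r \<in> {..l}"
  show "(if r \<le> m - k \<and> l - r \<le> k then of_nat (m - k choose r) * B 1 0 ^ r * B 0 0 ^ (m - k - r) *
           of_nat (k choose (l - r)) * B 1 1 ^ (l - r) * B 0 1 ^ (k - (l - r)) else 0) =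
        c ^ (m - k) * d ^ k * (if r \<le> m - k \<and> l - r \<le> k then of_nat (m - k choose r) * A 1 0 ^ r * A 0 0 ^ (m - k - r) *
           of_nat (k choose (l - r)) * A 1 1 ^ (l - r) * A 0 1 ^ (k - (l - r)) else 0)"
  proof (cases "r \<le> m - k \<and> l - r \<le> k")
    case True
    have "r + (m - k - r) = m - k" using True by arith
    then have e1: "c ^ (m - k) = c ^ r * c ^ (m - k - r)" by (metis power_add)
    have e2: "d ^ k = d ^ (l - r) * d ^ (k - (l - r))" using True by (simp flip: power_add)
    show ?thesis using True assms(1-4) by (simp add: e1 e2 power_mult_distrib algebra_simps)
  next
    case False
    then show ?thesis by (simp only: if_False mult_zero_right)
  qed
qed simp

lemma symcoeff_col0:
  assumes "B 0 0 = A 0 0" "B 1 0 = A 1 0"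
  shows "symcoeff m B 0 l = symcoeff m A 0 l"
  unfolding symcoeff_def using assms by (intro sum.cong) auto


lemma rinner_comm: "rinner n a b = rinner n b a"
  unfolding rinner_def by (simp add: mult.commute)

lemma pairip_eq: "pairip n {a, b} = rinner n a b"
  unfolding pairip_def
proof (rule some_equality)
  show "\<exists>x y. {a, b} = {x, y} \<and> rinner n a b = rinner n x y" by blast
next
  fix t assume "\<exists>x y. {a, b} = {x, y} \<and> t = rinner n x y"
  then obtain x y where "{a, b} = {x, y}" "t = rinner n x y" by blast
  then show "t = rinner n a b" by (auto simp: doubleton_eq_iff rinner_comm)
qed

lemma mv_r:
  assumes "n \<ge> 2"
  shows "mv n g (\<lambda>l. if l = 0 then \<alpha> else if l = 1 then \<beta> else 0) = (\<lambda>a. if a < n then g a 0 * \<alpha> + g a 1 * \<beta> else 0)"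
proof -
  have "(\<Sum>l<n. g a l * (if l = 0 then \<alpha> else if l = 1 then \<beta> else 0)) =
        (\<Sum>l<n. (if l = 0 then g a 0 * \<alpha> else 0) + (if l = 1 then g a 1 * \<beta> else 0))" for a
    by (rule sum.cong) auto
  also have "\<dots> a = g a 0 * \<alpha> + g a 1 * \<beta>" for a
    using assms by (simp add: sum.distrib)
  finally show ?thesis unfolding mv_def by auto
qed

lemma A_eq:
  assumes "n \<ge> 2" "b < 2"
  shows "mmul n (mmul n omega (mmul n (cmat \<gamma>) (cmat g))) epsilon a b = Hm n \<gamma> a (\<lambda>s. g s b)"
proof -
  have "mmul n (mmul n omega (mmul n (cmat \<gamma>) (cmat g))) epsilon a b =
     (\<Sum>l<n. (if l = b then mmul n omega (mmul n (cmat \<gamma>) (cmat g)) a l else 0))"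
    unfolding mmul_def[of n _ epsilon] epsilon_def using assms(2) by (intro sum.cong) auto
  also have "\<dots> = mmul n omega (mmul n (cmat \<gamma>) (cmat g)) a b" using assms by simp
  finally show ?thesis by (simp add: mmul_def Hm_def cmat_def)
qed

lemma Hm_scale: "complex_of_real c * Hm n \<gamma> a u = Hm n \<gamma> a (\<lambda>s. c * u s)"
  unfolding Hm_def sum_distrib_left by (intro sum.cong) (auto simp: algebra_simps)

lemma Hm_cong: "(\<And>s. s < n \<Longrightarrow> u s = u' s) \<Longrightarrow> Hm n \<gamma> a u = Hm n \<gamma> a u'"
  unfolding Hm_def by (intro sum.cong) auto


lemma core2:
  assumes n4: "n \<ge> 4" and sec: "is_section \<theta> n s" and J: "J = {x0, x1}" and ne: "x0 \<noteq> x1"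
    and JI: "J \<in> I2 \<theta> n" and km: "k \<le> l1 - l2" and ev: "even (l2 + k)"
  shows "psi n s l1 l2 2 j k J (cmat \<gamma>) l = (if l \<le> l1 - l2 then complex_of_real (rinner n x0 x1 ^ j) *
     det2 (Bm n \<gamma> x0 x1) ^ l2 * symcoeff (l1 - l2) (Bm n \<gamma> x0 x1) k l else 0)"
proof -
  define m where "m = l1 - l2"
  define g where "g = s J"
  have og: "mv n g ` RJ n J = J" using sec JI unfolding is_section_def g_def by blast
  have cJ: "card J = 2" using J ne by simp
  define p where "p = rinner n x0 x1"
  have pp: "pairip n J = p" using J pairip_eq p_def by simp
  define Q1 where "Q1 = q1 n J"
  define Q2 where "Q2 = q2 n J"
  define rp where "rp = (\<lambda>l::nat. if l = 0 then Q1 / 2 else if l = 1 then Q2 / 2 else 0)"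
  define rm where "rm = (\<lambda>l::nat. if l = 0 then Q1 / 2 else if l = 1 then - Q2 / 2 else 0)"
  have RJ: "RJ n J = {rp, rm}" using J unfolding RJ_def rp_def rm_def Q1_def Q2_def by auto
  have n2: "n \<ge> 2" using n4 by simp
  have mp: "mv n g rp = (\<lambda>a. if a < n then g a 0 * (Q1/2) + g a 1 * (Q2/2) else 0)"
    unfolding rp_def by (rule mv_r[OF n2])
  have mm: "mv n g rm = (\<lambda>a. if a < n then g a 0 * (Q1/2) + g a 1 * (-Q2/2) else 0)"
    unfolding rm_def by (rule mv_r[OF n2])
  have "{mv n g rp, mv n g rm} = {x0, x1}" using og RJ J by simp
  then have "(mv n g rp = x0 \<and> mv n g rm = x1) \<or> (mv n g rp = x1 \<and> mv n g rm = x0)"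
    by (auto simp: doubleton_eq_iff)
  then obtain \<sigma> :: real where sg: "\<sigma> = 1 \<or> \<sigma> = -1"
    and c0: "\<And>a. a < n \<Longrightarrow> Q1 * g a 0 = x0 a + x1 a"
    and c1: "\<And>a. a < n \<Longrightarrow> \<sigma> * Q2 * g a 1 = x0 a - x1 a"
  proof (elim disjE conjE)
    assume e1: "mv n g rp = x0" and e2: "mv n g rm = x1"
    have "Q1 * g a 0 = x0 a + x1 a \<and> 1 * Q2 * g a 1 = x0 a - x1 a" if "a < n" for a
    proof -
      have "x0 a = g a 0 * (Q1/2) + g a 1 * (Q2/2)" using fun_cong[OF e1, of a] mp that by simp
      moreover have "x1 a = g a 0 * (Q1/2) + g a 1 * (-Q2/2)" using fun_cong[OF e2, of a] mm that by simp
      ultimately show ?thesis by (simp add: algebra_simps)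
    qed
    then show ?thesis using that[of 1] by auto
  next
    assume e1: "mv n g rp = x1" and e2: "mv n g rm = x0"
    have "Q1 * g a 0 = x0 a + x1 a \<and> (-1) * Q2 * g a 1 = x0 a - x1 a" if "a < n" for a
    proof -
      have "x1 a = g a 0 * (Q1/2) + g a 1 * (Q2/2)" using fun_cong[OF e1, of a] mp that by simp
      moreover have "x0 a = g a 0 * (Q1/2) + g a 1 * (-Q2/2)" using fun_cong[OF e2, of a] mm that by simp
      ultimately show ?thesis by (simp add: algebra_simps)
    qed
    then show ?thesis using that[of "-1"] by auto
  qed
  define A where "A = mmul n (mmul n omega (mmul n (cmat \<gamma>) (cmat g))) epsilon"
  define B where "B = Bm n \<gamma> x0 x1"
  have A0: "A a 0 = Hm n \<gamma> a (\<lambda>s. g s 0)" for a unfolding A_def by (rule A_eq[OF n2]) simp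
  have A1: "A a 1 = Hm n \<gamma> a (\<lambda>s. g s 1)" for a unfolding A_def by (rule A_eq[OF n2]) simp
  have B0: "B a 0 = complex_of_real Q1 * A a 0" for a
    unfolding A0 B_def Bm_def Hm_scale
    by (rule Hm_cong) (simp add: c0)
  have B1: "B a 1 = complex_of_real (\<sigma> * Q2) * A a 1" for a
    unfolding A1 B_def Bm_def Hm_scale
    by (rule Hm_cong) (simp add: c1[simplified])
  have dB: "det2 B = complex_of_real Q1 * complex_of_real (\<sigma> * Q2) * det2 A"
    by (rule det2_scale) (simp_all add: B0 B1[simplified])
  have sB: "symcoeff m B k l = complex_of_real Q1 ^ (m - k) * complex_of_real (\<sigma> * Q2) ^ k * symcoeff m A k l"
    by (rule symcoeff_scale) (simp_all add: B0 B1[simplified] km m_def)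
  have s0: "\<sigma> ^ (l2 + k) = 1" using sg ev by auto
  have s1: "complex_of_real (\<sigma> ^ k) * complex_of_real (\<sigma> ^ l2) = 1"
  proof -
    have "\<sigma> ^ k * \<sigma> ^ l2 = 1" using s0 by (simp add: power_add mult.commute)
    then have "complex_of_real (\<sigma> ^ k * \<sigma> ^ l2) = 1" by simp
    then show ?thesis by (simp only: of_real_mult)
  qed
  have xi: "xi n l1 l2 2 j k J = p ^ j * Q1 ^ (l2 + (m - k)) * Q2 ^ (l2 + k)"
  proof -
    have "l2 + (l1 - l2) - k = l2 + (m - k)" using km unfolding m_def by arith
    then show ?thesis unfolding xi_def using cJ by (simp add: pfun_def pp Q1_def Q2_def)
  qed
  have sw: "(\<Sum>k'\<le>m. wbasis k k' * symcoeff m A k' l) = symcoeff m A k l"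
  proof -
    have "(\<Sum>k'\<le>m. wbasis k k' * symcoeff m A k' l) = (\<Sum>k'\<le>m. if k' = k then symcoeff m A k' l else 0)"
      unfolding wbasis_def by (rule sum.cong) auto
    then show ?thesis using km m_def by simp
  qed
  show ?thesis
  proof (cases "l \<le> m")
    case True
    have "psi n s l1 l2 2 j k J (cmat \<gamma>) l = complex_of_real (xi n l1 l2 2 j k J) * (det2 A ^ l2 * symcoeff m A k l)"
      unfolding psi_def pi_rep_def Psi_def rho_def A_def[symmetric] g_def[symmetric] m_def[symmetric]
      using True sw by simp
    also have "\<dots> = complex_of_real (p ^ j) * det2 B ^ l2 * symcoeff m B k l"
      unfolding xi dB sB
      by (simp add: power_mult_distrib power_add algebra_simps s1 flip: of_real_power)
    finally show ?thesis using True unfolding B_def m_def p_def by simp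
  next
    case False
    then show ?thesis unfolding psi_def pi_rep_def Psi_def rho_def m_def by simp
  qed
qed


lemma core1:
  assumes n4: "n \<ge> 4" and sec: "is_section \<theta> n s" and J: "J = {x0}"
    and JI: "J \<in> I2 \<theta> n"
  shows "psi n s l1 0 1 0 0 J (cmat \<gamma>) l = (if l \<le> l1 then symcoeff l1 (\<lambda>a b. Hm n \<gamma> a x0) 0 l else 0)"
proof -
  define g where "g = s J"
  have og: "mv n g ` RJ n J = J" using sec JI unfolding is_section_def g_def by blast
  have "x0 \<in> sphere_n n" using JI J unfolding I2_def indep_def by auto
  then have r1: "rinner n x0 x0 = 1" unfolding sphere_n_def by auto
  have pp: "pairip n J = 1" using J pairip_eq[of n x0 x0] r1 by simp
  have Q1: "q1 n J = 2" unfolding q1_def pp by simp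
  have Q2: "q2 n J = 0" unfolding q2_def pp by simp
  define r where "r = (\<lambda>l::nat. if l = 0 then (1::real) else if l = 1 then 0 else 0)"
  have RJ: "RJ n J = {r}" using J unfolding RJ_def r_def Q1 Q2 by auto
  have n2: "n \<ge> 2" using n4 by simp
  have mp: "mv n g r = (\<lambda>a. if a < n then g a 0 * 1 + g a 1 * 0 else 0)"
    unfolding r_def by (rule mv_r[OF n2])
  have "mv n g r = x0" using og RJ J by simp
  then have c0: "g a 0 = x0 a" if "a < n" for a using fun_cong[of _ _ a] mp that by force
  define A where "A = mmul n (mmul n omega (mmul n (cmat \<gamma>) (cmat g))) epsilon"
  have A0: "A a 0 = Hm n \<gamma> a (\<lambda>s. g s 0)" for a unfolding A_def by (rule A_eq[OF n2]) simp
  have A0': "A a 0 = Hm n \<gamma> a x0" for a unfolding A0 by (rule Hm_cong) (simp add: c0)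
  have cJ: "card J = 1" using J by simp
  have xi: "xi n l1 0 1 0 0 J = 1" unfolding xi_def using cJ by simp
  have sw: "(\<Sum>k'\<le>l1. wbasis 0 k' * symcoeff l1 A k' l) = symcoeff l1 A 0 l"
  proof -
    have "(\<Sum>k'\<le>l1. wbasis 0 k' * symcoeff l1 A k' l) = (\<Sum>k'\<le>l1. if k' = 0 then symcoeff l1 A k' l else 0)"
      unfolding wbasis_def by (rule sum.cong) auto
    then show ?thesis by simp
  qed
  have sc: "symcoeff l1 A 0 l = symcoeff l1 (\<lambda>a b. Hm n \<gamma> a x0) 0 l"
    by (rule symcoeff_col0) (simp_all add: A0')
  show ?thesis
  proof (cases "l \<le> l1")
    case True
    have "psi n s l1 0 1 0 0 J (cmat \<gamma>) l = symcoeff l1 A 0 l"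
      unfolding psi_def pi_rep_def Psi_def rho_def A_def[symmetric] g_def[symmetric] xi
      using True sw by simp
    then show ?thesis using True sc by simp
  next
    case False
    then show ?thesis unfolding psi_def pi_rep_def Psi_def rho_def by simp
  qed
qed


lemma Ieq_I2: "J \<in> Ieq \<theta> n i \<Longrightarrow> i \<le> 2 \<Longrightarrow> J \<in> I2 \<theta> n"
  unfolding Ieq_def I2_def by auto

theorem mainTheorem6:
  fixes \<theta> :: real and n l1 l2 i j k :: nat
    and s :: "(nat \<Rightarrow> real) set \<Rightarrow> (nat \<Rightarrow> nat \<Rightarrow> real)"
    and w :: "nat \<Rightarrow> complex"
  assumes "n \<ge> 4" and "l2 \<le> l1" and "admissible l1 l2 i j k"
    and "is_section \<theta> n s"
  shows "\<exists>P \<in> polyfun (vars n i).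
           \<forall>\<gamma> (x :: nat \<Rightarrow> nat \<Rightarrow> real). orth n \<gamma> \<longrightarrow> x ` {..<i} \<in> Ieq \<theta> n i \<longrightarrow>
             Winner (l1 - l2) w (psi n s l1 l2 i j k (x ` {..<i}) (cmat \<gamma>)) = P (assign \<gamma> x)"
proof -
  from assms(3) consider (c0) "i = 0" "l1 = 0" "l2 = 0" "j = 0" "k = 0"
    | (c1) "i = 1" "l2 = 0" "j = 0" "k = 0" | (c2) "i = 2" "k \<le> l1 - l2" "even (l2 + k)"
    unfolding admissible_def by blast
  then show ?thesis
  proof cases
    case c0
    show ?thesis
      by (rule bexI[of _ "\<lambda>_. w 0"])
        (use c0 in \<open>auto simp: Winner_def psi_def xi_def pi_rep_def Psi_def rho_def wbasis_def symcoeff_def intro: polyfun.pconst\<close>)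
  next
    case c1
    define P where "P = (\<lambda>v :: (nat \<times> nat) + (nat \<times> nat) \<Rightarrow> real. \<Sum>l\<le>l1. w l * cnj (symcoeff l1 (\<lambda>a b. Hm n (\<lambda>a b. v (Inl (a, b))) a (\<lambda>t. v (Inr (0, t)))) 0 l))"
    show ?thesis
    proof (rule bexI[of _ P])
      show "P \<in> polyfun (vars n i)" unfolding P_def c1
        by (intro pf_intros pf_symcoeff pf_B1) auto
    next
      show "\<forall>\<gamma> (x :: nat \<Rightarrow> nat \<Rightarrow> real). orth n \<gamma> \<longrightarrow> x ` {..<i} \<in> Ieq \<theta> n i \<longrightarrow>
             Winner (l1 - l2) w (psi n s l1 l2 i j k (x ` {..<i}) (cmat \<gamma>)) = P (assign \<gamma> x)"
      proof (intro allI impI)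
        fix \<gamma> :: "nat \<Rightarrow> nat \<Rightarrow> real" and x :: "nat \<Rightarrow> nat \<Rightarrow> real"
        assume "x ` {..<i} \<in> Ieq \<theta> n i"
        moreover have xe: "x ` {..<i} = {x 0}" using c1 by (simp add: lessThan_Suc)
        ultimately have JI: "{x 0} \<in> I2 \<theta> n" using Ieq_I2 c1 by fastforce
        have ps: "psi n s l1 0 1 0 0 {x 0} (cmat \<gamma>) l = (if l \<le> l1 then symcoeff l1 (\<lambda>a b. Hm n \<gamma> a (x 0)) 0 l else 0)" for l
          by (rule core1[OF assms(1) assms(4) refl JI])
        have ag: "(\<lambda>a b. assign \<gamma> x (Inl (a, b))) = \<gamma>" "(\<lambda>t. assign \<gamma> x (Inr (0, t))) = x 0"
          by (auto simp: assign_def)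
        show "Winner (l1 - l2) w (psi n s l1 l2 i j k (x ` {..<i}) (cmat \<gamma>)) = P (assign \<gamma> x)"
          unfolding xe unfolding c1 P_def ag Winner_def by (intro sum.cong) (auto simp: ps ps[unfolded One_nat_def])
      qed
    qed
  next
    case c2
    define m where "m = l1 - l2"
    define P where "P = (\<lambda>v :: (nat \<times> nat) + (nat \<times> nat) \<Rightarrow> real. \<Sum>l\<le>m. w l * cnj (complex_of_real (rinner n (\<lambda>t. v (Inr (0, t))) (\<lambda>t. v (Inr (1, t))) ^ j) *
         det2 (Bm n (\<lambda>a b. v (Inl (a, b))) (\<lambda>t. v (Inr (0, t))) (\<lambda>t. v (Inr (1, t)))) ^ l2 *
         symcoeff m (Bm n (\<lambda>a b. v (Inl (a, b))) (\<lambda>t. v (Inr (0, t))) (\<lambda>t. v (Inr (1, t)))) k l))"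
    show ?thesis
    proof (rule bexI[of _ P])
      show "P \<in> polyfun (vars n i)" unfolding P_def c2 rinner_def of_real_power of_real_sum of_real_mult
        by (intro pf_intros pf_symcoeff pf_det2 pf_Bm polyfun.pvar) (auto simp: vars_def)
    next
      show "\<forall>\<gamma> (x :: nat \<Rightarrow> nat \<Rightarrow> real). orth n \<gamma> \<longrightarrow> x ` {..<i} \<in> Ieq \<theta> n i \<longrightarrow>
             Winner (l1 - l2) w (psi n s l1 l2 i j k (x ` {..<i}) (cmat \<gamma>)) = P (assign \<gamma> x)"
      proof (intro allI impI)
        fix \<gamma> :: "nat \<Rightarrow> nat \<Rightarrow> real" and x :: "nat \<Rightarrow> nat \<Rightarrow> real"
        assume xI: "x ` {..<i} \<in> Ieq \<theta> n i"
        have xe: "x ` {..<i} = {x 0, x 1}" using c2 by (auto simp: lessThan_Suc numeral_2_eq_2)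
        have JI: "{x 0, x 1} \<in> I2 \<theta> n" using Ieq_I2 c2 xI xe by fastforce
        have "card {x 0, x 1} = 2" using xI xe c2 unfolding Ieq_def by simp
        then have ne: "x 0 \<noteq> x 1" by auto
        have ps: "psi n s l1 l2 2 j k {x 0, x 1} (cmat \<gamma>) l = (if l \<le> l1 - l2 then complex_of_real (rinner n (x 0) (x 1) ^ j) *
             det2 (Bm n \<gamma> (x 0) (x 1)) ^ l2 * symcoeff (l1 - l2) (Bm n \<gamma> (x 0) (x 1)) k l else 0)" for l
          by (rule core2[OF assms(1) assms(4) refl ne JI c2(2) c2(3)])
        have ag: "(\<lambda>a b. assign \<gamma> x (Inl (a, b))) = \<gamma>" "(\<lambda>t. assign \<gamma> x (Inr (0, t))) = x 0"
           "(\<lambda>t. assign \<gamma> x (Inr (1, t))) = x 1"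
          by (auto simp: assign_def)
        show "Winner (l1 - l2) w (psi n s l1 l2 i j k (x ` {..<i}) (cmat \<gamma>)) = P (assign \<gamma> x)"
          unfolding xe unfolding c2(1) P_def ag Winner_def m_def by (intro sum.cong) (auto simp: ps ps[unfolded One_nat_def])
      qed
    qed
  qed
qed

end
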